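(* Let $N\ge1$, $R>0$, $m>1$, $p>1$, $\alpha,\beta\in\mathbb R$. Let $a:[0,\infty)\to(0,\infty)$ be continuous with $c_1\le a(t)\le c_2$ for all $t\ge 0$, for some constants $0<c_1\le c_2$, and let $g:[0,\infty)\to[0,\infty)$ be continuous. If $$\gamma>0,\qquad N+\beta>0,\qquad \beta-\alpha+m\le 0,$$ then the problem $$-\Big(\frac{r^{N+\alpha-1}|v'(r)|^{m-2}v'(r)}{(a(r)+g(v(r)))^\gamma}\Big)'=r^{N+\beta-1}v^p(r),\ 0<r<R,\qquad v'(0)=0,\ v(R)=0,$$ has no positive solutions.
   Context: A positive solution is a function $v$, positive on $[0,R)$, with $v\in C^1[0,R)\cap C[0,R]$, such that $r\mapsto r^{N+\alpha-1}|v'(r)|^{m-2}v'(r)\,[a(r)+g(v(r))]^{-\gamma}$ belongs to $C^1(0,R)$ and $v$ satisfies the displayed equation and boundary conditions. *)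

theory Defs
  imports "HOL-Analysis.Analysis"
begin

definition flux :: "nat \<Rightarrow> real \<Rightarrow> real \<Rightarrow> real \<Rightarrow> (real \<Rightarrow> real) \<Rightarrow> (real \<Rightarrow> real)
    \<Rightarrow> (real \<Rightarrow> real) \<Rightarrow> (real \<Rightarrow> real) \<Rightarrow> real \<Rightarrow> real" where
  "flux N \<alpha> m \<gamma> a g v v' r =
     r powr (real N + \<alpha> - 1) * \<bar>v' r\<bar> powr (m - 2) * v' r / (a r + g (v r)) powr \<gamma>"

definition positive_solution :: "nat \<Rightarrow> real \<Rightarrow> real \<Rightarrow> real \<Rightarrow> real \<Rightarrow> real
    \<Rightarrow> (real \<Rightarrow> real) \<Rightarrow> (real \<Rightarrow> real) \<Rightarrow> real \<Rightarrow> (real \<Rightarrow> real) \<Rightarrow> bool" where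
  "positive_solution N \<alpha> \<beta> m p \<gamma> a g R v \<longleftrightarrow>
     (\<forall>r\<in>{0..<R}. v r > 0) \<and>
     continuous_on {0..R} v \<and>
     (\<exists>v'. (\<forall>r\<in>{0..<R}. (v has_real_derivative v' r) (at r within {0..<R})) \<and>
           continuous_on {0..<R} v' \<and>
           v' 0 = 0 \<and>
           (\<exists>w'. (\<forall>r\<in>{0<..<R}. (flux N \<alpha> m \<gamma> a g v v' has_real_derivative w' r) (at r)) \<and>
                 continuous_on {0<..<R} w' \<and>
                 (\<forall>r\<in>{0<..<R}. - w' r = r powr (real N + \<beta> - 1) * v r powr p))) \<and>
     v R = 0"

end

theory Submission imports Defs begin

lemma powr_zero_lim:
  fixes e :: real assumes "e > 0"
  shows "((\<lambda>s::real. s powr e) \<longlongrightarrow> 0) (at_right 0)"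
  by (rule tendsto_zero_powrI[where b=e]) (auto intro: tendsto_ident_at eventually_at_rightI[where b=1] simp: assms)

lemma abs_powr_lem:
  fixes x m :: real
  shows "\<bar>x\<bar> powr (m - 2) * \<bar>x\<bar> = \<bar>x\<bar> powr (m - 1)"
proof (cases "x = 0")
  case False
  then have "\<bar>x\<bar> powr (m - 2) * \<bar>x\<bar> powr 1 = \<bar>x\<bar> powr (m - 2 + 1)" by (simp only: powr_add)
  moreover have "m - 2 + 1 = m - 1" by simp
  ultimately show ?thesis by (metis abs_ge_zero powr_one)
qed simp

lemma neg_powr_lem:
  fixes x m :: real
  assumes "x < 0"
  shows "\<bar>x\<bar> powr (m - 2) * x = - (\<bar>x\<bar> powr (m - 1))"
proof -
  have "x = - \<bar>x\<bar>" using assms by simp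
  then have "\<bar>x\<bar> powr (m - 2) * x = - (\<bar>x\<bar> powr (m - 2) * \<bar>x\<bar>)" by (metis mult_minus_right)
  then show ?thesis by (simp add: abs_powr_lem)
qed

theorem theorem1p3:
  fixes N :: nat and R m p \<alpha> \<beta> \<gamma> c1 c2 :: real and a g :: "real \<Rightarrow> real"
  assumes "N \<ge> 1" and "R > 0" and "m > 1" and "p > 1"
    and "continuous_on {0..} a" and "0 < c1" and "c1 \<le> c2"
    and "\<And>t. t \<ge> 0 \<Longrightarrow> c1 \<le> a t \<and> a t \<le> c2"
    and "continuous_on {0..} g" and "\<And>t. t \<ge> 0 \<Longrightarrow> g t \<ge> 0"
    and "\<gamma> > 0" and "real N + \<beta> > 0" and "\<beta> - \<alpha> + m \<le> 0"
  shows "\<not> (\<exists>v. positive_solution N \<alpha> \<beta> m p \<gamma> a g R v)"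
proof
  assume "\<exists>v. positive_solution N \<alpha> \<beta> m p \<gamma> a g R v"
  then obtain v where sol: "positive_solution N \<alpha> \<beta> m p \<gamma> a g R v" by blast
  have vpos: "\<And>r. 0 \<le> r \<Longrightarrow> r < R \<Longrightarrow> v r > 0" and vcont: "continuous_on {0..R} v"
    using sol unfolding positive_solution_def by auto
  from sol obtain v' w' where
    vder0: "\<And>r. r\<in>{0..<R} \<Longrightarrow> (v has_real_derivative v' r) (at r within {0..<R})"
    and v'cont: "continuous_on {0..<R} v'"
    and Fder: "\<And>r. r\<in>{0<..<R} \<Longrightarrow> (flux N \<alpha> m \<gamma> a g v v' has_real_derivative w' r) (at r)"
    and weq: "\<And>r. r\<in>{0<..<R} \<Longrightarrow> - w' r = r powr (real N + \<beta> - 1) * v r powr p"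
    unfolding positive_solution_def by blast
  define F where "F = flux N \<alpha> m \<gamma> a g v v'"
  define n1 where "n1 = real N + \<alpha> - 1"
  define nb where "nb = real N + \<beta>"
  have nbpos: "nb > 0" using assms unfolding nb_def by simp
  have n1pos: "n1 > 0" using assms unfolding n1_def by simp
  have Fdef: "\<And>r. F r = r powr n1 * \<bar>v' r\<bar> powr (m - 2) * v' r / (a r + g (v r)) powr \<gamma>"
    unfolding F_def flux_def n1_def by simp
  have vder: "\<And>r. 0 < r \<Longrightarrow> r < R \<Longrightarrow> (v has_real_derivative v' r) (at r)"
  proof -
    fix r :: real assume "0 < r" "r < R"
    then have "at r within {0..<R} = at r" by (intro at_within_interior) auto
    with vder0[of r] \<open>0 < r\<close> \<open>r < R\<close> show "(v has_real_derivative v' r) (at r)" by simp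
  qed
  have FderN: "\<And>r. 0 < r \<Longrightarrow> r < R \<Longrightarrow> (F has_real_derivative (- (r powr (nb - 1) * v r powr p))) (at r)"
    using Fder weq unfolding F_def nb_def by (metis greaterThanLessThan_iff minus_minus)
  have Acl: "\<And>r. 0 \<le> r \<Longrightarrow> r < R \<Longrightarrow> a r + g (v r) \<ge> c1"
    using assms(8) assms(10) vpos by (smt (verit))
  have Flim: "(F \<longlongrightarrow> 0) (at_right 0)"
  proof -
    have v'c2: "continuous_on {0..R/2} v'" using v'cont assms(2) by (elim continuous_on_subset) auto
    obtain M where M: "\<And>x. x \<in> {0..R/2} \<Longrightarrow> \<bar>v' x\<bar> \<le> M"
      using compact_imp_bounded[OF compact_continuous_image[OF v'c2 compact_Icc]]
      unfolding bounded_iff by force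
    have bd: "\<bar>F s\<bar> \<le> s powr n1 * M powr (m - 1) / c1 powr \<gamma>" if s: "0 < s" "s < R/2" for s
    proof -
      have A: "a s + g (v s) \<ge> c1" using Acl s by auto
      have Ap: "(a s + g (v s)) powr \<gamma> \<ge> c1 powr \<gamma>" using A assms(6) assms(11) by (intro powr_mono2) auto
      have c1p: "c1 powr \<gamma> > 0" using assms(6) by simp
      have "\<bar>F s\<bar> = s powr n1 * (\<bar>v' s\<bar> powr (m - 2) * \<bar>v' s\<bar>) / (a s + g (v s)) powr \<gamma>"
        unfolding Fdef using s A assms(6) by (simp add: abs_mult)
      also have "\<dots> = s powr n1 * \<bar>v' s\<bar> powr (m - 1) / (a s + g (v s)) powr \<gamma>"
        by (simp add: abs_powr_lem)
      also have "\<dots> \<le> s powr n1 * M powr (m - 1) / (a s + g (v s)) powr \<gamma>"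
        using M[of s] s assms(3) by (intro divide_right_mono mult_left_mono powr_mono2) auto
      also have "\<dots> \<le> s powr n1 * M powr (m - 1) / c1 powr \<gamma>"
        using Ap c1p by (intro divide_left_mono) (auto intro!: mult_pos_pos)
      finally show ?thesis .
    qed
    have ev: "eventually (\<lambda>s. norm (F s) \<le> s powr n1 * M powr (m - 1) / c1 powr \<gamma>) (at_right 0)"
      using bd assms(2) by (auto intro!: eventually_at_rightI[where b="R/2"])
    have "((\<lambda>s. s powr n1 * M powr (m - 1) / c1 powr \<gamma>) \<longlongrightarrow> 0 * M powr (m - 1) / c1 powr \<gamma>) (at_right 0)"
      by (intro tendsto_intros powr_zero_lim n1pos) (use assms(6) in simp)
    then show ?thesis using Lim_null_comparison[OF ev] by simp
  qed
  have Fcont: "\<And>s t. 0 < s \<Longrightarrow> t < R \<Longrightarrow> continuous_on {s..t} F"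
  proof -
    fix s t :: real assume st: "0 < s" "t < R"
    show "continuous_on {s..t} F"
    proof (intro continuous_at_imp_continuous_on ballI)
      fix x assume "x \<in> {s..t}"
      then show "isCont F x" using FderN[of x] st by (intro DERIV_isCont) auto
    qed
  qed
  have Fdec: "\<And>s t. 0 < s \<Longrightarrow> s < t \<Longrightarrow> t < R \<Longrightarrow> F t < F s"
  proof -
    fix s t :: real assume st: "0 < s" "s < t" "t < R"
    show "F t < F s"
    proof (rule DERIV_neg_imp_decreasing_open[OF st(2) _ Fcont])
      fix x assume x: "s < x" "x < t"
      have "x powr (nb - 1) * v x powr p > 0" using vpos[of x] x st by simp
      then show "\<exists>y. (F has_real_derivative y) (at x) \<and> y < 0"
        using FderN[of x] x st by (intro exI[of _ "- (x powr (nb - 1) * v x powr p)"]) auto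
    qed (use st in auto)
  qed
  have Fle0: "\<And>t. 0 < t \<Longrightarrow> t < R \<Longrightarrow> F t \<le> 0"
  proof -
    fix t :: real assume t: "0 < t" "t < R"
    have ev: "eventually (\<lambda>s. F t \<le> F s) (at_right 0)"
      using t Fdec by (intro eventually_at_rightI[where b=t]) (auto intro: less_imp_le)
    show "F t \<le> 0"
      by (rule tendsto_le[OF _ Flim tendsto_const ev]) simp
  qed
  have Fneg: "\<And>t. 0 < t \<Longrightarrow> t < R \<Longrightarrow> F t < 0"
  proof -
    fix t :: real assume t: "0 < t" "t < R"
    have "F t < F (t/2)" using Fdec[of "t/2" t] t by auto
    also have "F (t/2) \<le> 0" using Fle0[of "t/2"] t by auto
    finally show "F t < 0" .
  qed
  have v'neg: "\<And>t. 0 < t \<Longrightarrow> t < R \<Longrightarrow> v' t < 0"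
  proof (rule ccontr)
    fix t :: real assume t: "0 < t" "t < R" and "\<not> v' t < 0"
    then have "v' t \<ge> 0" by simp
    moreover have "a t + g (v t) \<ge> c1" using Acl t by auto
    ultimately have "F t \<ge> 0" unfolding Fdef using t assms(6) by simp
    with Fneg[OF t] show False by simp
  qed
  have vdec: "\<And>s t. 0 < s \<Longrightarrow> s \<le> t \<Longrightarrow> t < R \<Longrightarrow> v t \<le> v s"
  proof -
    fix s t :: real assume st: "0 < s" "s \<le> t" "t < R"
    have vc: "continuous_on {s..t} v" using vcont st by (elim continuous_on_subset) auto
    show "v t \<le> v s"
    proof (rule DERIV_nonpos_imp_decreasing_open[OF st(2) _ vc])
      fix x assume x: "s < x" "x < t"
      then show "\<exists>y. (v has_real_derivative y) (at x) \<and> y \<le> 0"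
        using vder[of x] v'neg[of x] st by (intro exI[of _ "v' x"]) auto
    qed
  qed
  have key: "\<And>t. 0 < t \<Longrightarrow> t < R \<Longrightarrow> - F t \<ge> v t powr p * t powr nb / nb"
  proof -
    fix t :: real assume t: "0 < t" "t < R"
    define k where "k = (\<lambda>s. - F s - v t powr p * s powr nb / nb)"
    have kder: "(k has_real_derivative (x powr (nb - 1) * v x powr p - v t powr p * (nb * x powr (nb - 1)) / nb)) (at x)"
      if x: "0 < x" "x < R" for x
      unfolding k_def using FderN[OF x] x
      by (auto intro!: derivative_eq_intros)
    have kcont: "continuous_on {s..t} k" if "0 < s" for s
    proof (intro continuous_at_imp_continuous_on ballI)
      fix x assume "x \<in> {s..t}"
      then show "isCont k x" using kder[of x] t that by (intro DERIV_isCont) auto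
    qed
    have kmono: "k s \<le> k t" if s: "0 < s" "s < t" for s
    proof (rule DERIV_nonneg_imp_increasing_open[OF _ _ kcont[OF s(1)]])
      fix x assume x: "s < x" "x < t"
      have "v t \<le> v x" using vdec[of x t] x s t by auto
      then have "v t powr p \<le> v x powr p" using vpos[of t] t assms(4) by (intro powr_mono2) auto
      then have "0 \<le> x powr (nb - 1) * (v x powr p - v t powr p)" by simp
      also have "x powr (nb - 1) * (v x powr p - v t powr p) = x powr (nb - 1) * v x powr p - v t powr p * (nb * x powr (nb - 1)) / nb"
        using nbpos by (simp add: field_simps)
      finally show "\<exists>y. (k has_real_derivative y) (at x) \<and> 0 \<le> y"
        using kder[of x] x s t by (intro exI[of _ "x powr (nb - 1) * v x powr p - v t powr p * (nb * x powr (nb - 1)) / nb"]) auto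
    qed (use s in auto)
    have klim: "(k \<longlongrightarrow> - 0 - v t powr p * 0 / nb) (at_right 0)"
      unfolding k_def by (intro tendsto_intros Flim powr_zero_lim nbpos) (use nbpos in simp)
    have ev: "eventually (\<lambda>s. k s \<le> k t) (at_right 0)"
      using kmono t by (intro eventually_at_rightI[where b=t]) auto
    have "0 \<le> k t" using tendsto_le[OF _ tendsto_const klim ev] by simp
    then show "- F t \<ge> v t powr p * t powr nb / nb" unfolding k_def by simp
  qed
  define r0 where "r0 = R / 2"
  have r0: "0 < r0" "r0 < R" using assms unfolding r0_def by auto
  define E where "E = v r0 powr p * r0 powr (\<beta> - \<alpha> + m) * c1 powr \<gamma> / nb"
  have Epos: "E > 0" unfolding E_def using vpos[of r0] r0 nbpos assms(6) by simp
  define q where "q = 1 / (m - 1)"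
  have q: "q > 0" "(m - 1) * q = 1" unfolding q_def using assms(3) by auto
  obtain D where Dpos: "D > 0" and Dbd: "\<And>t. 0 < t \<Longrightarrow> t \<le> r0 \<Longrightarrow> - v' t \<ge> D / t"
  proof
    show "E powr q > 0" using Epos by simp
  next
    fix t :: real assume t: "0 < t" "t \<le> r0"
    have tR: "t < R" using t r0 by simp
    define A where "A = a t + g (v t)"
    have A: "A \<ge> c1" unfolding A_def using Acl t tR by auto
    have Ap: "A powr \<gamma> \<ge> c1 powr \<gamma>" using A assms(6) assms(11) by (intro powr_mono2) auto
    define X where "X = \<bar>v' t\<bar>"
    have X0: "X \<ge> 0" unfolding X_def by simp
    have FX: "- F t = t powr n1 * X powr (m - 1) / A powr \<gamma>"
      unfolding Fdef A_def X_def using neg_powr_lem[OF v'neg[OF t(1) tR], of m] by (simp add: mult.assoc)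
    have tn1: "t powr n1 > 0" using t by simp
    have Apos: "A powr \<gamma> > 0" using A assms(6) by simp
    have "X powr (m - 1) = (- F t) * A powr \<gamma> / t powr n1"
      using FX tn1 Apos by (simp add: field_simps)
    also have "\<dots> \<ge> (v t powr p * t powr nb / nb) * c1 powr \<gamma> / t powr n1"
      using key[OF t(1) tR] Ap tn1 vpos[of t] t tR nbpos assms(6) Fneg[OF t(1) tR]
      by (intro divide_right_mono mult_mono) auto
    finally have X1: "X powr (m - 1) \<ge> (v t powr p * t powr nb / nb) * c1 powr \<gamma> / t powr n1" .
    have tt: "t powr nb / t powr n1 = t powr (1 - m) * t powr (\<beta> - \<alpha> + m)"
      using t by (simp add: powr_diff[symmetric] powr_add[symmetric] nb_def n1_def algebra_simps)
    have t2: "t powr (\<beta> - \<alpha> + m) \<ge> r0 powr (\<beta> - \<alpha> + m)"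
      using t assms(13) by (intro powr_mono2') auto
    have vt: "v t powr p \<ge> v r0 powr p" using vdec[of t r0] t r0 vpos[of r0] assms(4) by (intro powr_mono2) auto
    have "(v t powr p * t powr nb / nb) * c1 powr \<gamma> / t powr n1
          = v t powr p * (t powr nb / t powr n1) * c1 powr \<gamma> / nb" by (simp add: field_simps)
    also have "\<dots> = v t powr p * t powr (\<beta> - \<alpha> + m) * c1 powr \<gamma> / nb * t powr (1 - m)"
      unfolding tt by (simp add: field_simps)
    also have "\<dots> \<ge> E * t powr (1 - m)"
      unfolding E_def using vt t2 nbpos assms(6) vpos[of r0] r0
      by (intro mult_right_mono divide_right_mono mult_mono) auto
    finally have X2: "X powr (m - 1) \<ge> E * t powr (1 - m)" using X1 by linarith
    have "X = (X powr (m - 1)) powr q" using q X0 by (simp add: powr_powr)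
    also have "\<dots> \<ge> (E * t powr (1 - m)) powr q"
      using X2 Epos t q by (intro powr_mono2) auto
    finally have "X \<ge> (E * t powr (1 - m)) powr q" .
    moreover have "(E * t powr (1 - m)) powr q = E powr q / t"
    proof -
      have "(E * t powr (1 - m)) powr q = E powr q * t powr ((1 - m) * q)"
        using Epos t by (simp add: powr_mult powr_powr)
      also have "(1 - m) * q = - 1" using q by (simp add: algebra_simps)
      finally show ?thesis using t by (simp add: powr_minus divide_inverse)
    qed
    moreover have "X = - v' t" unfolding X_def using v'neg[OF t(1) tR] by simp
    ultimately show "E powr q / t \<le> - v' t" by simp
  qed
  obtain B where B: "\<And>x. x \<in> {0..R} \<Longrightarrow> \<bar>v x\<bar> \<le> B"
    using compact_imp_bounded[OF compact_continuous_image[OF vcont compact_Icc]]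
    unfolding bounded_iff by force
  have B0: "B \<ge> 0" using B[of 0] assms(2) by force
  have hmono: "\<And>e. 0 < e \<Longrightarrow> e \<le> r0 \<Longrightarrow> v e + D * ln e \<ge> v r0 + D * ln r0"
  proof -
    fix e :: real assume e: "0 < e" "e \<le> r0"
    have hc: "continuous_on {e..r0} (\<lambda>x. v x + D * ln x)"
    proof (intro continuous_on_add continuous_on_mult continuous_on_const continuous_on_ln continuous_on_id)
      show "continuous_on {e..r0} v" using vcont e r0 by (elim continuous_on_subset) auto
    qed (use e in auto)
    show "v e + D * ln e \<ge> v r0 + D * ln r0"
    proof (rule DERIV_nonpos_imp_decreasing_open[OF e(2) _ hc])
      fix x assume x: "e < x" "x < r0"
      have "v' x + D * (1 / x) \<le> 0" using Dbd[of x] x e by simp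
      moreover have "((\<lambda>x. v x + D * ln x) has_real_derivative v' x + D * (1 / x)) (at x)"
        using vder[of x] x e r0 by (auto intro!: derivative_eq_intros)
      ultimately show "\<exists>y. ((\<lambda>x. v x + D * ln x) has_real_derivative y) (at x) \<and> y \<le> 0" by blast
    qed
  qed
  define e where "e = r0 * exp (- (B + 1) / D)"
  have e: "0 < e" "e \<le> r0" using r0 Dpos B0 unfolding e_def by (auto simp: mult_le_cancel_left1 divide_nonpos_pos)
  have "ln e = ln r0 - (B + 1) / D" using r0 unfolding e_def by (simp add: ln_mult minus_divide_left)
  then have "D * ln r0 = D * ln e + (B + 1)" using Dpos by (simp add: field_simps)
  then have "v e \<ge> v r0 + B + 1" using hmono[OF e] by linarith
  moreover have "v r0 > 0" using vpos r0 by auto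
  moreover have "v e \<le> B" using B[of e] e r0 by auto
  ultimately show False by linarith
qed
end
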